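(* Let $X$ be a connected weighted bipartite graph with vertex $u$. If $\theta\in\Phi_{\mathbf e_u}\setminus\{0\}$, then $(E_\theta)_{u,u}\le \frac12$. If additionally $0\in\Phi_{\mathbf e_u}$, then $(E_\theta)_{u,u}<\frac12$.
   Context: Graphs are simple, connected, undirected, with nonzero real edge weights; $A=A(X)$ is the weighted adjacency matrix with spectral decomposition $A=\sum_\lambda \lambda E_\lambda$ over its distinct eigenvalues, $E_\lambda$ being the orthogonal projection onto the $\lambda$-eigenspace. The eigenvalue support of $u$ is $\Phi_{\mathbf e_u}=\{\lambda: E_\lambda\mathbf e_u\ne 0\}$. *)

theory Defs
  imports "HOL-Analysis.Analysis"
begin

text \<open>A weighted graph on the finite vertex type 'n is given by its weighted adjacency
matrix A: real symmetric with zero diagonal; i and j are adjacent iff A i j is nonzero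
(so edge weights are nonzero reals and the graph is simple and undirected).\<close>

definition weighted_adjacency :: "real^'n^'n \<Rightarrow> bool" where
  "weighted_adjacency A \<longleftrightarrow> transpose A = A \<and> (\<forall>i. A $ i $ i = 0)"

definition adjacent :: "real^'n^'n \<Rightarrow> 'n \<Rightarrow> 'n \<Rightarrow> bool" where
  "adjacent A i j \<longleftrightarrow> A $ i $ j \<noteq> 0"

definition graph_connected :: "real^'n^'n \<Rightarrow> bool" where
  "graph_connected A \<longleftrightarrow> (\<forall>i j. (adjacent A)\<^sup>*\<^sup>* i j)"

definition graph_bipartite :: "real^'n^'n \<Rightarrow> bool" where
  "graph_bipartite A \<longleftrightarrow> (\<exists>S. \<forall>i j. adjacent A i j \<longrightarrow> (i \<in> S \<longleftrightarrow> j \<notin> S))"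

definition eigenspace :: "real^'n^'n \<Rightarrow> real \<Rightarrow> (real^'n) set" where
  "eigenspace A t = {x. A *v x = t *s x}"

text \<open>Orthogonal projection matrix onto the lambda-eigenspace (zero if lambda is not an eigenvalue).\<close>
definition eigenproj :: "real^'n^'n \<Rightarrow> real \<Rightarrow> real^'n^'n" where
  "eigenproj A t = (THE P. P ** P = P \<and> transpose P = P \<and> range (\<lambda>x. P *v x) = eigenspace A t)"

definition eig_support :: "real^'n^'n \<Rightarrow> 'n \<Rightarrow> real set" where
  "eig_support A u = {t. eigenproj A t *v axis u 1 \<noteq> 0}"

end

theory Submission
  imports Defs
begin

lemma proj_unique:
  fixes P Q :: "real^'n^'n"
  assumes "P ** P = P" "transpose P = P" "Q ** Q = Q" "transpose Q = Q"
    "range (\<lambda>x. P *v x) = range (\<lambda>x. Q *v x)"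
  shows "P = Q"
proof -
  have QP: "Q ** P = P"
  proof (subst matrix_eq, intro allI)
    fix x
    have "P *v x \<in> range (\<lambda>x. Q *v x)" using assms(5) by blast
    then obtain y where y: "P *v x = Q *v y" by auto
    have "(Q ** P) *v x = Q *v (Q *v y)" by (simp add: y flip: matrix_vector_mul_assoc)
    also have "\<dots> = Q *v y" by (simp add: matrix_vector_mul_assoc assms(3))
    finally show "(Q ** P) *v x = P *v x" using y by simp
  qed
  have PQ: "P ** Q = Q"
  proof (subst matrix_eq, intro allI)
    fix x
    have "Q *v x \<in> range (\<lambda>x. P *v x)" using assms(5) by (metis rangeI)
    then obtain y where y: "Q *v x = P *v y" by auto
    have "(P ** Q) *v x = P *v (P *v y)" by (simp add: y flip: matrix_vector_mul_assoc)
    also have "\<dots> = P *v y" by (simp add: matrix_vector_mul_assoc assms(1))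
    finally show "(P ** Q) *v x = Q *v x" using y by simp
  qed
  have "P = transpose (Q ** P)" using QP assms(2) by simp
  also have "\<dots> = P ** Q" by (simp add: matrix_transpose_mul assms)
  finally show ?thesis using PQ by simp
qed

lemma proj_exists:
  fixes V :: "(real^'n) set"
  assumes "subspace V"
  shows "\<exists>P. P ** P = P \<and> transpose P = P \<and> range (\<lambda>x. P *v x) = V"
proof -
  obtain B where B: "B \<subseteq> V" "pairwise orthogonal B" "\<And>x. x \<in> B \<Longrightarrow> norm x = 1"
    "independent B" "span B = V"
    by (metis orthonormal_basis_subspace [OF assms])
  have fin: "finite B" using B(4) independent_imp_finite by blast
  define P :: "real^'n^'n" where "P = (\<chi> i j. \<Sum>b\<in>B. b$i * b$j)"
  have Pv: "P *v x = (\<Sum>b\<in>B. (b \<bullet> x) *\<^sub>R b)" for x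
    unfolding P_def
    by (simp add: vec_eq_iff matrix_vector_mult_def inner_vec_def sum_component
        sum_distrib_left sum_distrib_right sum.swap[of _ B] mult_ac)
  have inB: "P *v x \<in> V" for x
  proof -
    have "(\<Sum>b\<in>B. (b \<bullet> x) *\<^sub>R b) \<in> span B"
      by (intro span_sum span_scale span_base)
    then show ?thesis using B(5) Pv by simp
  qed
  have bnorm: "b \<bullet> b = 1" if "b \<in> B" for b
    using B(3)[OF that] by (metis norm_eq_1)
  have orth: "c \<bullet> (P *v x) = c \<bullet> x" if "c \<in> B" for c x
  proof -
    have "c \<bullet> (P *v x) = (\<Sum>b\<in>B. (b \<bullet> x) * (c \<bullet> b))" by (simp add: Pv inner_sum_right)
    also have "\<dots> = (\<Sum>b\<in>{c}. (b \<bullet> x) * (c \<bullet> b))"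
      apply (rule sum.mono_neutral_right)
      using fin that B(2) by (auto simp: pairwise_def orthogonal_def)
    also have "\<dots> = c \<bullet> x" using bnorm[OF that] by (simp add: inner_commute)
    finally show ?thesis .
  qed
  have fixP: "P *v v = v" if "v \<in> V" for v
  proof -
    have "P *v v - v \<in> span B" using inB that B(5) by (metis span_diff span_superset subsetD)
    moreover have "orthogonal (P *v v - v) y" if "y \<in> B" for y
      using orth[OF that, of v] unfolding orthogonal_def
      by (metis inner_commute inner_diff_right right_minus_eq)
    ultimately have "orthogonal (P *v v - v) (P *v v - v)" by (metis orthogonal_to_span)
    then show ?thesis by (simp add: orthogonal_def)
  qed
  have "P ** P = P"
    by (subst matrix_eq) (simp add: inB fixP flip: matrix_vector_mul_assoc)
  moreover have "transpose P = P" unfolding P_def by (simp add: transpose_def vec_eq_iff mult.commute)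
  moreover have "range (\<lambda>x. P *v x) = V" using inB fixP by (metis (mono_tags, lifting) image_subset_iff rangeI subsetI subset_antisym)
  ultimately show ?thesis by blast
qed

lemma eigenspace_subspace: "subspace (eigenspace A t)"
  unfolding subspace_def eigenspace_def
  by (auto simp: matrix_vector_right_distrib scalar_mult_eq_scaleR matrix_vector_mult_scaleR
      scaleR_add_right)

lemma eigenproj_props:
  shows "eigenproj A t ** eigenproj A t = eigenproj A t \<and> transpose (eigenproj A t) = eigenproj A t
     \<and> range (\<lambda>x. eigenproj A t *v x) = eigenspace A t"
proof -
  obtain P where P: "P ** P = P \<and> transpose P = P \<and> range (\<lambda>x. P *v x) = eigenspace A t"
    using proj_exists[OF eigenspace_subspace] by blast
  show ?thesis unfolding eigenproj_def
    apply (rule theI[of _ P])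
    using P apply blast
    using P proj_unique by metis
qed

lemma eigenproj_eqI:
  assumes "P ** P = P" "transpose P = P" "range (\<lambda>x. P *v x) = eigenspace A t"
  shows "eigenproj A t = P"
  using proj_unique[of "eigenproj A t" P] eigenproj_props[of A t] assms by metis

lemma proj_diag:
  fixes P :: "real^'n^'n"
  assumes "P ** P = P" "transpose P = P"
  shows "P $ u $ u = axis u 1 \<bullet> (P *v axis u 1)"
    and "axis u 1 \<bullet> (P *v axis u 1) = (P *v axis u 1) \<bullet> (P *v axis u 1)"
proof -
  show "P $ u $ u = axis u 1 \<bullet> (P *v axis u 1)"
    by (simp add: inner_axis' matrix_vector_mult_basis column_def)
  have "axis u 1 \<bullet> (P *v axis u 1) = axis u 1 \<bullet> (P *v (P *v axis u 1))"
    by (simp add: matrix_vector_mul_assoc assms(1))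
  also have "\<dots> = (axis u 1 v* P) \<bullet> (P *v axis u 1)" by (simp add: dot_lmul_matrix)
  also have "axis u 1 v* P = P *v axis u 1"
    by (metis assms(2) transpose_matrix_vector)
  finally show "axis u 1 \<bullet> (P *v axis u 1) = (P *v axis u 1) \<bullet> (P *v axis u 1)" .
qed

lemma eig_orth:
  fixes A :: "real^'n^'n"
  assumes "transpose A = A" "x \<in> eigenspace A s" "y \<in> eigenspace A t" "s \<noteq> t"
  shows "x \<bullet> y = 0"
proof -
  have "x \<bullet> (A *v y) = (x v* A) \<bullet> y" by (simp add: dot_lmul_matrix)
  also have "x v* A = A *v x" by (metis assms(1) transpose_matrix_vector)
  finally have "x \<bullet> (A *v y) = (A *v x) \<bullet> y" .
  then have "t * (x \<bullet> y) = s * (x \<bullet> y)" using assms(2,3)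
    by (simp add: eigenspace_def scalar_mult_eq_scaleR)
  then show ?thesis using assms(4) by simp
qed

theorem proposition10:
  fixes A :: "real^'n^'n" and u :: 'n and \<theta> :: real
  assumes "weighted_adjacency A" and "graph_connected A" and "graph_bipartite A"
    and "\<theta> \<in> eig_support A u - {0}"
  shows "eigenproj A \<theta> $ u $ u \<le> 1/2 \<and>
         (0 \<in> eig_support A u \<longrightarrow> eigenproj A \<theta> $ u $ u < 1/2)"
proof -
  have symA: "transpose A = A" using assms(1) by (simp add: weighted_adjacency_def)
  have th0: "\<theta> \<noteq> 0" using assms(4) by simp
  obtain S where S: "\<And>i j. adjacent A i j \<Longrightarrow> (i \<in> S \<longleftrightarrow> j \<notin> S)"
    using assms(3) unfolding graph_bipartite_def by blast
  define s :: "'n \<Rightarrow> real" where "s i = (if i \<in> S then 1 else -1)" for i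
  have ss: "s i * s i = 1" for i by (simp add: s_def)
  have As: "A $ i $ j * s j = - (s i * A $ i $ j)" for i j
  proof (cases "A $ i $ j = 0")
    case False
    then have "i \<in> S \<longleftrightarrow> j \<notin> S" using S by (simp add: adjacent_def)
    then show ?thesis by (auto simp: s_def)
  qed simp
  define D :: "real^'n \<Rightarrow> real^'n" where "D v = (\<chi> i. s i * v $ i)" for v
  have DD: "D (D v) = v" for v by (simp add: D_def vec_eq_iff mult.assoc[symmetric] ss)
  have AD: "A *v D x = - D (A *v x)" for x
  proof -
    have "(\<Sum>j\<in>UNIV. A $ i $ j * (s j * x $ j)) = - (s i * (\<Sum>j\<in>UNIV. A $ i $ j * x $ j))" for i
    proof -
      have "(\<Sum>j\<in>UNIV. A $ i $ j * (s j * x $ j)) = (\<Sum>j\<in>UNIV. (A $ i $ j * s j) * x $ j)"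
        by (simp add: mult.assoc)
      also have "\<dots> = (\<Sum>j\<in>UNIV. - (s i * (A $ i $ j * x $ j)))" by (simp add: As mult.assoc)
      finally show ?thesis by (simp add: sum_negf sum_distrib_left)
    qed
    then show ?thesis by (simp add: D_def vec_eq_iff matrix_vector_mult_def)
  qed
  have Deig: "D x \<in> eigenspace A (- t)" if "x \<in> eigenspace A t" for x t
  proof -
    have "A *v x = t *s x" using that by (simp add: eigenspace_def)
    then have "A *v D x = - D (t *s x)" by (simp add: AD)
    then have "A *v D x = (- t) *s D x" by (simp add: D_def vec_eq_iff mult_ac)
    then show ?thesis by (simp add: eigenspace_def)
  qed
  define E where "E = eigenproj A \<theta>"
  have EE: "E ** E = E" and Et: "transpose E = E" and Er: "range (\<lambda>x. E *v x) = eigenspace A \<theta>"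
    using eigenproj_props[of A \<theta>] by (auto simp: E_def)
  have Esym: "E $ j $ i = E $ i $ j" for i j using Et by (metis transpose_def vec_lambda_beta)
  define F :: "real^'n^'n" where "F = (\<chi> i j. s i * E $ i $ j * s j)"
  have Fv: "F *v x = D (E *v D x)" for x
    by (simp add: F_def D_def vec_eq_iff matrix_vector_mult_def sum_distrib_left mult_ac)
  have FF: "F ** F = F"
  proof -
    have "E *v (E *v y) = E *v y" for y by (simp add: matrix_vector_mul_assoc EE)
    then show ?thesis by (subst matrix_eq) (simp add: Fv DD flip: matrix_vector_mul_assoc)
  qed
  have Ft: "transpose F = F"
    by (simp add: F_def transpose_def vec_eq_iff Esym mult_ac)
  have Fr: "range (\<lambda>x. F *v x) = eigenspace A (- \<theta>)"
  proof
    show "range (\<lambda>x. F *v x) \<subseteq> eigenspace A (- \<theta>)"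
      using Er Deig by (auto simp: Fv)
  next
    show "eigenspace A (- \<theta>) \<subseteq> range (\<lambda>x. F *v x)"
    proof
      fix y assume "y \<in> eigenspace A (- \<theta>)"
      then have "D y \<in> eigenspace A \<theta>" using Deig by fastforce
      then obtain z where z: "D y = E *v z" using Er by (metis imageE)
      have "F *v (D z) = y" by (simp add: Fv DD flip: z)
      then show "y \<in> range (\<lambda>x. F *v x)" by (metis rangeI)
    qed
  qed
  have E2: "eigenproj A (- \<theta>) = F" using eigenproj_eqI[OF FF Ft Fr] .
  have FE: "F $ u $ u = E $ u $ u" by (simp add: F_def mult_ac ss)
  define e :: "real^'n" where "e = axis u 1"
  define E3 where "E3 = eigenproj A 0"
  have E3E: "E3 ** E3 = E3" and E3t: "transpose E3 = E3" and E3r: "range (\<lambda>x. E3 *v x) = eigenspace A 0"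
    using eigenproj_props[of A 0] by (auto simp: E3_def)
  define p1 where "p1 = E *v e"
  define p2 where "p2 = F *v e"
  define p3 where "p3 = E3 *v e"
  have p1e: "p1 \<in> eigenspace A \<theta>" using Er p1_def by blast
  have p2e: "p2 \<in> eigenspace A (- \<theta>)" using Fr p2_def by blast
  have p3e: "p3 \<in> eigenspace A 0" using E3r p3_def by blast
  have o12: "p1 \<bullet> p2 = 0" by (rule eig_orth[OF symA p1e p2e]) (use th0 in simp)
  have o13: "p1 \<bullet> p3 = 0" by (rule eig_orth[OF symA p1e p3e]) (use th0 in simp)
  have o23: "p2 \<bullet> p3 = 0" by (rule eig_orth[OF symA p2e p3e]) (use th0 in simp)
  have d1: "E $ u $ u = e \<bullet> p1" "e \<bullet> p1 = p1 \<bullet> p1"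
    using proj_diag[OF EE Et, of u] by (simp_all add: e_def p1_def)
  have d2: "F $ u $ u = e \<bullet> p2" "e \<bullet> p2 = p2 \<bullet> p2"
    using proj_diag[OF FF Ft, of u] by (simp_all add: e_def p2_def)
  have d3: "e \<bullet> p3 = p3 \<bullet> p3"
    using proj_diag[OF E3E E3t, of u] by (simp_all add: e_def p3_def)
  have ee: "e \<bullet> e = 1" by (simp add: e_def inner_axis_axis)
  have "0 \<le> (e - p1 - p2 - p3) \<bullet> (e - p1 - p2 - p3)" by simp
  also have "\<dots> = e \<bullet> e - 2 * (e \<bullet> p1) - 2 * (e \<bullet> p2) - 2 * (e \<bullet> p3)
      + p1 \<bullet> p1 + p2 \<bullet> p2 + p3 \<bullet> p3 + 2 * (p1 \<bullet> p2) + 2 * (p1 \<bullet> p3) + 2 * (p2 \<bullet> p3)"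
    by (simp add: inner_diff_left inner_diff_right inner_commute algebra_simps)
  finally have key: "2 * E $ u $ u + p3 \<bullet> p3 \<le> 1"
    using d1 d2 d3 ee o12 o13 o23 FE by linarith
  have "E $ u $ u \<le> 1/2" using key inner_ge_zero[of p3] by linarith
  moreover have "E $ u $ u < 1/2" if "0 \<in> eig_support A u"
  proof -
    have "p3 \<noteq> 0" using that by (simp add: eig_support_def p3_def E3_def e_def)
    then have "p3 \<bullet> p3 > 0" by simp
    then show ?thesis using key by linarith
  qed
  ultimately show ?thesis by (simp add: E_def)
qed

end
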